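(* Let $h_1,\dots,h_r\in\mathbb{R}^n$, $b_1,\dots,b_r\in\mathbb{R}$, $V_1,\dots,V_s\in\mathbb{R}^{n\times n}$, $v_1,\dots,v_s\in\mathbb{R}$, and define the polyhedra $$S=\{x\in\mathbb{R}^n \mid h_i^Tx\le b_i,\ i=1,\dots,r\},\qquad U_0=\{A\in\mathbb{R}^{n\times n}\mid \mathrm{Tr}(V_j^TA)\le v_j,\ j=1,\dots,s\}.$$ Let $A_\star\in U_0$, let $x_1,\dots,x_m\in\mathbb{R}^n$, let $y_k=A_\star x_k$ for $k=1,\dots,m$, let $U_m=\{A\in U_0\mid Ax_k=y_k,\ k=1,\dots,m\}$ and let $c\in\mathbb{R}^n$. Consider the problem $$\text{(P)}\qquad \min_{x\in\mathbb{R}^n}\ c^Tx\quad \text{s.t. } x\in S,\quad Ax\in S\ \ \forall A\in U_m,$$ and the linear program, in the variables $x\in\mathbb{R}^n$, $\mu^{(i)}=(\mu^{(i)}_1,\dots,\mu^{(i)}_s)\in\mathbb{R}^s$ and $\eta_k^{(i)}\in\mathbb{R}^n$ ($i=1,\dots,r$, $k=1,\dots,m$), $$\text{(Q)}\qquad \begin{aligned}\min\quad & c^Tx\\ \text{s.t.}\quad & h_i^Tx\le b_i, && i=1,\dots,r,\\ & \textstyle\sum_{k=1}^m y_k^T\eta_k^{(i)}+\sum_{j=1}^s\mu_j^{(i)}v_j\le b_i, && i=1,\dots,r,\\ & \textstyle x h_i^T=\sum_{k=1}^m x_k\eta_k^{(i)T}+\sum_{j=1}^s \mu_j^{(i)}V_j^T,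 && i=1,\dots,r,\\ & \mu^{(i)}\ge 0, && i=1,\dots,r.\end{aligned}$$ Then the feasible set of (P) equals the projection onto $x$-space of the feasible set of (Q). In particular, the optimal values of (P) and (Q) are equal, and the optimal solutions of (P) are exactly the projections onto $x$-space of the optimal solutions of (Q).
   Context: Setting: an unknown linear dynamical system $x_{t+1}=A_\star x_t$ whose matrix $A_\star$ is known to lie in the polyhedral uncertainty set $U_0$; the measurements $(x_k,y_k)$ are the observed one-step transitions. Problem (P) asks for the cheapest point that stays in the safety region $S$ for one step under every matrix consistent with $U_0$ and the measurements. *)

theory Defs
  imports "HOL-Analysis.Analysis"
begin

text \<open>Index sets i = 0..r-1, j = 0..s-1, k = 0..m-1 (0-based instead of 1-based).
  Vectors in R^n are real^'n, n x n matrices are real^'n^'n.\<close>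

definition polyS :: "nat \<Rightarrow> (nat \<Rightarrow> real^'n) \<Rightarrow> (nat \<Rightarrow> real) \<Rightarrow> (real^'n) set" where
  "polyS r h b = {x. \<forall>i<r. h i \<bullet> x \<le> b i}"

definition polyU0 :: "nat \<Rightarrow> (nat \<Rightarrow> real^'n^'n) \<Rightarrow> (nat \<Rightarrow> real) \<Rightarrow> (real^'n^'n) set" where
  "polyU0 s V v = {A. \<forall>j<s. trace (transpose (V j) ** A) \<le> v j}"

definition polyUm :: "nat \<Rightarrow> (nat \<Rightarrow> real^'n^'n) \<Rightarrow> (nat \<Rightarrow> real) \<Rightarrow> nat \<Rightarrow> (nat \<Rightarrow> real^'n)
    \<Rightarrow> (nat \<Rightarrow> real^'n) \<Rightarrow> (real^'n^'n) set" where
  "polyUm s V v m xs ys = {A \<in> polyU0 s V v. \<forall>k<m. A *v xs k = ys k}"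

definition outer :: "real^'n \<Rightarrow> real^'n \<Rightarrow> real^'n^'n" where
  "outer x y = (\<chi> i j. x $ i * y $ j)"

definition feasP :: "nat \<Rightarrow> (nat \<Rightarrow> real^'n) \<Rightarrow> (nat \<Rightarrow> real) \<Rightarrow> (real^'n^'n) set \<Rightarrow> (real^'n) set" where
  "feasP r h b U = {x. x \<in> polyS r h b \<and> (\<forall>A\<in>U. A *v x \<in> polyS r h b)}"

text \<open>Feasible set of (Q): triples (x, mu, eta) with mu i j = mu^(i)_j and eta i k = eta^(i)_k.
  Values of mu, eta outside the index ranges are unconstrained.\<close>
definition feasQ :: "nat \<Rightarrow> (nat \<Rightarrow> real^'n) \<Rightarrow> (nat \<Rightarrow> real) \<Rightarrow> nat \<Rightarrow> (nat \<Rightarrow> real^'n^'n)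
    \<Rightarrow> (nat \<Rightarrow> real) \<Rightarrow> nat \<Rightarrow> (nat \<Rightarrow> real^'n) \<Rightarrow> (nat \<Rightarrow> real^'n)
    \<Rightarrow> ((real^'n) \<times> (nat \<Rightarrow> nat \<Rightarrow> real) \<times> (nat \<Rightarrow> nat \<Rightarrow> real^'n)) set" where
  "feasQ r h b s V v m xs ys = {(x, \<mu>, \<eta>).
     (\<forall>i<r. h i \<bullet> x \<le> b i) \<and>
     (\<forall>i<r. (\<Sum>k<m. ys k \<bullet> \<eta> i k) + (\<Sum>j<s. \<mu> i j * v j) \<le> b i) \<and>
     (\<forall>i<r. outer x (h i) = (\<Sum>k<m. outer (xs k) (\<eta> i k)) + (\<Sum>j<s. \<mu> i j *\<^sub>R transpose (V j))) \<and>
     (\<forall>i<r. \<forall>j<s. 0 \<le> \<mu> i j)}"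

end

theory Submission
  imports Defs
begin

lemma inner_mat: "(X::real^'n^'m) \<bullet> Y = (\<Sum>i\<in>UNIV. \<Sum>j\<in>UNIV. X$i$j * Y$i$j)"
  by (simp add: inner_vec_def)

lemma trace_inner: "trace (transpose (V::real^'n^'n) ** A) = V \<bullet> A"
  unfolding trace_def inner_mat matrix_matrix_mult_def transpose_def
  by (simp, rule sum.swap)

lemma inner_transpose: "transpose (X::real^'n^'n) \<bullet> transpose Y = X \<bullet> Y"
  unfolding inner_mat transpose_def
  by (simp, rule sum.swap)

lemma inner_outer: "(X::real^'n^'n) \<bullet> outer x e = e \<bullet> (transpose X *v x)"
  unfolding inner_mat outer_def inner_vec_def matrix_vector_mult_def transpose_def
  apply (simp add: sum_distrib_left mult_ac)
  by (rule sum.swap)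

lemma h_Ax: "h \<bullet> ((A::real^'n^'n) *v x) = transpose A \<bullet> outer x h"
  by (simp add: inner_outer)

lemma outer_add: "outer x (a + b) = outer x a + outer x b"
  by (simp add: outer_def vec_eq_iff algebra_simps)
lemma outer_scale: "outer x (c *\<^sub>R a) = c *\<^sub>R outer x a"
  by (simp add: outer_def vec_eq_iff algebra_simps)
lemma outer_zero: "outer x 0 = 0"
  by (simp add: outer_def vec_eq_iff)
lemma outer_sum: "outer x (sum f S) = (\<Sum>k\<in>S. outer x (f k))"
  by (induction S rule: infinite_finite_induct) (auto simp: outer_zero outer_add)

lemma if_scaleR_l: "(if P then 1 else 0) *\<^sub>R (x::'a::real_vector) = (if P then x else 0)"
  by simp
lemma if_mult_l: "(if P then 1 else 0) * (x::real) = (if P then x else 0)"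
  by simp
lemma if_inner_r: "(y::'a::real_inner) \<bullet> (if P then a else 0) = (if P then y \<bullet> a else 0)"
  by simp
lemma if_outer_r: "outer y (if P then a else 0) = (if P then outer y a else 0)"
  by (simp add: outer_zero)

lemma tr_add: "transpose ((X::real^'n^'n) + Y) = transpose X + transpose Y"
  by (simp add: vec_eq_iff transpose_def)
lemma tr_scale: "transpose (c *\<^sub>R (X::real^'n^'n)) = c *\<^sub>R transpose X"
  by (simp add: vec_eq_iff transpose_def)
lemma mv_add: "((X::real^'n^'n) + Y) *v x = X *v x + Y *v x"
  by (simp add: vec_eq_iff matrix_vector_mult_def sum.distrib algebra_simps)
lemma mv_scale: "(c *\<^sub>R (X::real^'n^'n)) *v x = c *\<^sub>R (X *v x)"
  by (simp add: vec_eq_iff matrix_vector_mult_def sum_distrib_left algebra_simps)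

lemma farkas_step:
  fixes M :: "real^'n^'n" and \<beta> :: real and xs ys :: "nat \<Rightarrow> real^'n"
    and V :: "nat \<Rightarrow> real^'n^'n" and v :: "nat \<Rightarrow> real" and Astar :: "real^'n^'n"
  assumes Astar: "Astar \<in> polyUm s V v m xs ys"
    and bound: "\<And>A. A \<in> polyUm s V v m xs ys \<Longrightarrow> transpose A \<bullet> M \<le> \<beta>"
  shows "\<exists>\<eta> \<mu>. (\<forall>j<s. 0 \<le> \<mu> j) \<and> (\<Sum>k<m. ys k \<bullet> \<eta> k) + (\<Sum>j<s. \<mu> j * v j) \<le> \<beta>
     \<and> M = (\<Sum>k<m. outer (xs k) (\<eta> k)) + (\<Sum>j<s. \<mu> j *\<^sub>R transpose (V j))"
proof (rule ccontr)
  assume nex: "\<not> ?thesis"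
  define D :: "((real^'n^'n) \<times> real) set" where
    "D = {((\<Sum>k<m. outer (xs k) (\<eta> k)) + (\<Sum>j<s. \<mu> j *\<^sub>R transpose (V j)),
           (\<Sum>k<m. ys k \<bullet> \<eta> k) + (\<Sum>j<s. \<mu> j * v j) + t) | \<eta> \<mu> t. (\<forall>j<s. 0 \<le> \<mu> j) \<and> 0 \<le> t}"
  define G :: "((real^'n^'n) \<times> real) set" where
    "G = insert (0,1) ((\<lambda>j. (transpose (V j), v j)) ` {..<s} \<union>
          (\<lambda>(k,e). (outer (xs k) e, ys k \<bullet> e)) ` ({..<m} \<times> (Basis \<union> uminus ` Basis)))"
  have finG: "finite G" by (simp add: G_def)
  have cD: "convex_cone D"
    unfolding convex_cone_iff
  proof (intro conjI ballI allI impI)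
    show "0 \<in> D"
      unfolding D_def
      by (rule CollectI, rule exI[of _ "\<lambda>_. 0"], rule exI[of _ "\<lambda>_. 0"], rule exI[of _ 0])
         (simp add: outer_zero zero_prod_def)
  next
    fix x y assume "x \<in> D" "y \<in> D"
    then obtain \<eta>1 \<mu>1 t1 \<eta>2 \<mu>2 t2 where
      x: "x = ((\<Sum>k<m. outer (xs k) (\<eta>1 k)) + (\<Sum>j<s. \<mu>1 j *\<^sub>R transpose (V j)),
           (\<Sum>k<m. ys k \<bullet> \<eta>1 k) + (\<Sum>j<s. \<mu>1 j * v j) + t1)" "\<forall>j<s. 0 \<le> \<mu>1 j" "0 \<le> t1"
      and y: "y = ((\<Sum>k<m. outer (xs k) (\<eta>2 k)) + (\<Sum>j<s. \<mu>2 j *\<^sub>R transpose (V j)),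
           (\<Sum>k<m. ys k \<bullet> \<eta>2 k) + (\<Sum>j<s. \<mu>2 j * v j) + t2)" "\<forall>j<s. 0 \<le> \<mu>2 j" "0 \<le> t2"
      unfolding D_def by blast
    show "x + y \<in> D"
      unfolding D_def
      apply (rule CollectI, rule exI[of _ "\<lambda>k. \<eta>1 k + \<eta>2 k"], rule exI[of _ "\<lambda>j. \<mu>1 j + \<mu>2 j"], rule exI[of _ "t1 + t2"])
      using x y by (simp add: outer_add sum.distrib scaleR_add_left inner_add_right distrib_right algebra_simps)
  next
    fix x and c :: real assume "x \<in> D" "0 \<le> c"
    then obtain \<eta>1 \<mu>1 t1 where
      x: "x = ((\<Sum>k<m. outer (xs k) (\<eta>1 k)) + (\<Sum>j<s. \<mu>1 j *\<^sub>R transpose (V j)),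
           (\<Sum>k<m. ys k \<bullet> \<eta>1 k) + (\<Sum>j<s. \<mu>1 j * v j) + t1)" "\<forall>j<s. 0 \<le> \<mu>1 j" "0 \<le> t1"
      unfolding D_def by blast
    show "c *\<^sub>R x \<in> D"
      unfolding D_def
      apply (rule CollectI, rule exI[of _ "\<lambda>k. c *\<^sub>R \<eta>1 k"], rule exI[of _ "\<lambda>j. c * \<mu>1 j"], rule exI[of _ "c * t1"])
      using x \<open>0 \<le> c\<close> by (simp add: outer_scale scaleR_sum_right sum_distrib_left scaleR_add_right distrib_left algebra_simps)
  qed
  have GD: "G \<subseteq> D"
  proof
    fix g assume "g \<in> G"
    then consider "g = (0,1)" | j where "j < s" "g = (transpose (V j), v j)"
      | k e where "k < m" "g = (outer (xs k) e, ys k \<bullet> e)"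
      unfolding G_def by fastforce
    then show "g \<in> D"
    proof cases
      case 1 show ?thesis
        unfolding 1 D_def
        by (rule CollectI, rule exI[of _ "\<lambda>_. 0"], rule exI[of _ "\<lambda>_. 0"], rule exI[of _ 1]) (simp add: outer_zero)
    next
      case (2 j) show ?thesis
        unfolding 2(2) D_def
        by (rule CollectI, rule exI[of _ "\<lambda>_. 0"], rule exI[of _ "\<lambda>j'. if j' = j then 1 else 0"], rule exI[of _ 0])
           (simp add: outer_zero if_scaleR_l if_mult_l sum.delta 2(1))
    next
      case (3 k e) show ?thesis
        unfolding 3(2) D_def
        by (rule CollectI, rule exI[of _ "\<lambda>k'. if k' = k then e else 0"], rule exI[of _ "\<lambda>_. 0"], rule exI[of _ 0])
           (simp add: outer_zero if_inner_r if_outer_r sum.delta 3(1))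
    qed
  qed
  have KD: "convex_cone hull G \<subseteq> D" by (rule hull_minimal[where S=convex_cone, OF GD cD])
  have notD: "(M, \<beta>) \<notin> D"
  proof
    assume "(M, \<beta>) \<in> D"
    then obtain \<eta> \<mu> t where "M = (\<Sum>k<m. outer (xs k) (\<eta> k)) + (\<Sum>j<s. \<mu> j *\<^sub>R transpose (V j))"
      "\<beta> = (\<Sum>k<m. ys k \<bullet> \<eta> k) + (\<Sum>j<s. \<mu> j * v j) + t" "\<forall>j<s. 0 \<le> \<mu> j" "0 \<le> t"
      unfolding D_def by blast
    moreover have "(\<Sum>k<m. ys k \<bullet> \<eta> k) + (\<Sum>j<s. \<mu> j * v j) \<le> \<beta>"
      using calculation by simp
    ultimately show False using nex by blast
  qed
  then have notK: "(M, \<beta>) \<notin> convex_cone hull G" using KD by blast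
  obtain a c where ac: "a \<bullet> (M, \<beta>) < c" "\<forall>x\<in>convex_cone hull G. a \<bullet> x > c"
    using separating_hyperplane_closed_point[OF convex_convex_cone_hull closed_convex_cone_hull[OF finG] notK]
    by blast
  have c0: "c < 0" using ac(2) convex_cone_hull_contains_0 by fastforce
  have pos: "a \<bullet> g \<ge> 0" if "g \<in> G" for g
  proof (rule ccontr)
    assume "\<not> a \<bullet> g \<ge> 0"
    then have ng: "a \<bullet> g < 0" by simp
    define l where "l = c / (a \<bullet> g)"
    have l0: "0 \<le> l" unfolding l_def using ng c0 by (simp add: divide_nonpos_neg)
    have "l *\<^sub>R g \<in> convex_cone hull G"
      using convex_cone_hull_mul[OF hull_inc[OF that] l0] .
    then have "a \<bullet> (l *\<^sub>R g) > c" using ac(2) by blast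
    moreover have "a \<bullet> (l *\<^sub>R g) = c" unfolding l_def using ng by simp
    ultimately show False by simp
  qed
  obtain P p where a: "a = (P, p)" by (cases a)
  have aM: "P \<bullet> M + p * \<beta> < 0" using ac(1) c0 a by simp
  have p0: "0 \<le> p" using pos[of "(0,1)"] a by (simp add: G_def)
  have pV: "P \<bullet> transpose (V j) + p * v j \<ge> 0" if "j < s" for j
    using pos[of "(transpose (V j), v j)"] a that by (simp add: G_def)
  have pX: "transpose P *v xs k + p *\<^sub>R ys k = 0" if "k < m" for k
  proof (rule euclidean_eqI)
    fix e :: "real^'n" assume e: "e \<in> Basis"
    have g1: "(outer (xs k) e, ys k \<bullet> e) \<in> G" unfolding G_def
      by (rule insertI2, rule UnI2, rule image_eqI[where x="(k,e)"]) (auto simp: e that)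
    have g2: "(outer (xs k) (-e), ys k \<bullet> (-e)) \<in> G" unfolding G_def
      by (rule insertI2, rule UnI2, rule image_eqI[where x="(k,-e)"]) (auto simp: e that)
    have "e \<bullet> (transpose P *v xs k) + p * (ys k \<bullet> e) \<ge> 0"
      using pos[OF g1] a by (simp add: inner_outer)
    moreover have "- (e \<bullet> (transpose P *v xs k)) - p * (ys k \<bullet> e) \<ge> 0"
      using pos[OF g2] a by (simp add: inner_outer)
    ultimately show "(transpose P *v xs k + p *\<^sub>R ys k) \<bullet> e = 0 \<bullet> e"
      by (simp add: inner_add_left inner_add_right inner_commute)
  qed
  have AsU: "Astar \<in> polyU0 s V v" and AsX: "\<forall>k<m. Astar *v xs k = ys k"
    using Astar unfolding polyUm_def by auto
  show False
  proof (cases "p = 0")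
    case False
    with p0 have pp: "p > 0" by simp
    define A where "A = (- 1 / p) *\<^sub>R transpose P"
    have "A \<in> polyUm s V v m xs ys"
      unfolding polyUm_def polyU0_def
    proof (intro CollectI conjI allI impI)
      fix j assume "j < s"
      have "trace (transpose (V j) ** A) = (- 1 / p) * (transpose (V j) \<bullet> P)"
        unfolding trace_inner A_def
        by (metis inner_scaleR_right inner_transpose transpose_transpose)
      also have "\<dots> \<le> v j"
        using pV[OF \<open>j < s\<close>] pp by (simp add: inner_commute field_simps)
      finally show "trace (transpose (V j) ** A) \<le> v j" .
    next
      fix k assume "k < m"
      have "A *v xs k = (- 1 / p) *\<^sub>R (transpose P *v xs k)"
        unfolding A_def by (rule mv_scale)
      also have "transpose P *v xs k = - (p *\<^sub>R ys k)"
        using pX[OF \<open>k < m\<close>] by (simp add: eq_neg_iff_add_eq_0)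
      finally show "A *v xs k = ys k" using pp by simp
    qed
    then have "transpose A \<bullet> M \<le> \<beta>" by (rule bound)
    moreover have "transpose A = (- 1 / p) *\<^sub>R P" unfolding A_def by (simp add: vec_eq_iff transpose_def)
    ultimately have "(- 1 / p) * (P \<bullet> M) \<le> \<beta>" by simp
    then have "- (P \<bullet> M) \<le> p * \<beta>" using pp by (simp add: field_simps)
    then show False using aM by simp
  next
    case True
    have PM: "P \<bullet> M < 0" using aM True by simp
    define l where "l = (\<bar>\<beta> - transpose Astar \<bullet> M\<bar> + 1) / (- (P \<bullet> M))"
    have l0: "0 \<le> l" unfolding l_def using PM
      by (intro divide_nonneg_pos) auto
    define A where "A = Astar + (- l) *\<^sub>R transpose P"
    have "A \<in> polyUm s V v m xs ys"
      unfolding polyUm_def polyU0_def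
    proof (intro CollectI conjI allI impI)
      fix j assume "j < s"
      have "trace (transpose (V j) ** A) = trace (transpose (V j) ** Astar) - l * (transpose (V j) \<bullet> P)"
        unfolding trace_inner A_def
        by (metis (no_types, lifting) inner_add_right inner_scaleR_right inner_transpose transpose_transpose
             minus_mult_left diff_conv_add_uminus)
      also have "\<dots> \<le> v j"
        using pV[OF \<open>j < s\<close>] True l0 AsU \<open>j < s\<close> unfolding polyU0_def
        by (simp add: inner_commute) (smt (verit) mult_nonneg_nonneg)
      finally show "trace (transpose (V j) ** A) \<le> v j" .
    next
      fix k assume "k < m"
      have e1: "A *v xs k = Astar *v xs k + (- l) *\<^sub>R (transpose P *v xs k)"
        unfolding A_def by (simp only: mv_add mv_scale)
      have e2: "transpose P *v xs k = 0" using pX[OF \<open>k < m\<close>] True by simp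
      show "A *v xs k = ys k"
        unfolding e1 e2 using AsX \<open>k < m\<close> by simp
    qed
    then have "transpose A \<bullet> M \<le> \<beta>" by (rule bound)
    moreover have "transpose A \<bullet> M = transpose Astar \<bullet> M - l * (P \<bullet> M)"
      unfolding A_def by (simp only: tr_add tr_scale transpose_transpose inner_add_left inner_scaleR_left)
    moreover have "l * (P \<bullet> M) = - (\<bar>\<beta> - transpose Astar \<bullet> M\<bar> + 1)"
      unfolding l_def using PM by simp
    ultimately show False by linarith
  qed
qed

theorem theorem1:
  fixes r s m :: nat
    and h :: "nat \<Rightarrow> real^'n" and b :: "nat \<Rightarrow> real"
    and V :: "nat \<Rightarrow> real^'n^'n" and v :: "nat \<Rightarrow> real"
    and Astar :: "real^'n^'n"
    and xs ys :: "nat \<Rightarrow> real^'n" and c :: "real^'n"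
  assumes Astar: "Astar \<in> polyU0 s V v"
    and ys: "\<And>k. k < m \<Longrightarrow> ys k = Astar *v xs k"
  defines "P \<equiv> feasP r h b (polyUm s V v m xs ys)"
    and "Q \<equiv> feasQ r h b s V v m xs ys"
  shows "P = fst ` Q \<and>
         (INF x\<in>P. ereal (c \<bullet> x)) = (INF z\<in>Q. ereal (c \<bullet> fst z)) \<and>
         {x \<in> P. \<forall>x'\<in>P. c \<bullet> x \<le> c \<bullet> x'}
           = fst ` {z \<in> Q. \<forall>z'\<in>Q. c \<bullet> fst z \<le> c \<bullet> fst z'}"
proof -
  have AsU: "Astar \<in> polyUm s V v m xs ys"
    using Astar ys unfolding polyUm_def by auto
  have PQ: "P = fst ` Q"
  proof
    show "fst ` Q \<subseteq> P"
    proof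
      fix x assume "x \<in> fst ` Q"
      then obtain \<mu> \<eta> where q: "(x, \<mu>, \<eta>) \<in> Q" by force
      have q1: "\<forall>i<r. h i \<bullet> x \<le> b i"
        and q2: "\<forall>i<r. (\<Sum>k<m. ys k \<bullet> \<eta> i k) + (\<Sum>j<s. \<mu> i j * v j) \<le> b i"
        and q3: "\<forall>i<r. outer x (h i) = (\<Sum>k<m. outer (xs k) (\<eta> i k)) + (\<Sum>j<s. \<mu> i j *\<^sub>R transpose (V j))"
        and q4: "\<forall>i<r. \<forall>j<s. 0 \<le> \<mu> i j"
        using q unfolding Q_def feasQ_def by auto
      have "h i \<bullet> (A *v x) \<le> b i" if A: "A \<in> polyUm s V v m xs ys" and i: "i < r" for A i
      proof -
        have AX: "\<forall>k<m. A *v xs k = ys k" and AV: "\<forall>j<s. trace (transpose (V j) ** A) \<le> v j"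
          using A unfolding polyUm_def polyU0_def by auto
        have "h i \<bullet> (A *v x) = transpose A \<bullet> outer x (h i)" by (rule h_Ax)
        also have "\<dots> = (\<Sum>k<m. transpose A \<bullet> outer (xs k) (\<eta> i k)) + (\<Sum>j<s. \<mu> i j * (transpose A \<bullet> transpose (V j)))"
          using q3 i by (simp add: inner_add_right inner_sum_right)
        also have "\<dots> = (\<Sum>k<m. ys k \<bullet> \<eta> i k) + (\<Sum>j<s. \<mu> i j * trace (transpose (V j) ** A))"
          using AX by (simp add: inner_outer inner_transpose trace_inner inner_commute)
        also have "\<dots> \<le> (\<Sum>k<m. ys k \<bullet> \<eta> i k) + (\<Sum>j<s. \<mu> i j * v j)"
          using AV q4 i by (intro add_left_mono sum_mono mult_left_mono) auto
        also have "\<dots> \<le> b i" using q2 i by auto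
        finally show ?thesis .
      qed
      then show "x \<in> P" using q1 unfolding P_def feasP_def polyS_def by auto
    qed
  next
    show "P \<subseteq> fst ` Q"
    proof
      fix x assume xP: "x \<in> P"
      have x1: "\<forall>i<r. h i \<bullet> x \<le> b i" using xP unfolding P_def feasP_def polyS_def by auto
      define \<Phi> where "\<Phi> = (\<lambda>i (\<eta>::nat \<Rightarrow> real^'n) (\<mu>::nat \<Rightarrow> real). i < r \<longrightarrow> ((\<forall>j<s. 0 \<le> \<mu> j) \<and> (\<Sum>k<m. ys k \<bullet> \<eta> k) + (\<Sum>j<s. \<mu> j * v j) \<le> b i
          \<and> outer x (h i) = (\<Sum>k<m. outer (xs k) (\<eta> k)) + (\<Sum>j<s. \<mu> j *\<^sub>R transpose (V j))))"
      have ex: "\<forall>i. \<exists>\<eta> \<mu>. \<Phi> i \<eta> \<mu>"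
      proof (intro allI)
        fix i
        show "\<exists>\<eta> \<mu>. \<Phi> i \<eta> \<mu>"
        proof (cases "i < r")
          case True
          have bnd: "transpose A \<bullet> outer x (h i) \<le> b i" if "A \<in> polyUm s V v m xs ys" for A
          proof -
            have "A *v x \<in> polyS r h b" using xP that unfolding P_def feasP_def by auto
            then have "h i \<bullet> (A *v x) \<le> b i" using True unfolding polyS_def by auto
            then show ?thesis by (simp only: h_Ax)
          qed
          have "\<exists>\<eta> \<mu>. (\<forall>j<s. 0 \<le> \<mu> j) \<and> (\<Sum>k<m. ys k \<bullet> \<eta> k) + (\<Sum>j<s. \<mu> j * v j) \<le> b i
             \<and> outer x (h i) = (\<Sum>k<m. outer (xs k) (\<eta> k)) + (\<Sum>j<s. \<mu> j *\<^sub>R transpose (V j))"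
            by (rule farkas_step[OF AsU bnd])
          then obtain \<eta> \<mu> where "(\<forall>j<s. 0 \<le> \<mu> j) \<and> (\<Sum>k<m. ys k \<bullet> \<eta> k) + (\<Sum>j<s. \<mu> j * v j) \<le> b i
             \<and> outer x (h i) = (\<Sum>k<m. outer (xs k) (\<eta> k)) + (\<Sum>j<s. \<mu> j *\<^sub>R transpose (V j))"
            by blast
          then have "\<Phi> i \<eta> \<mu>" unfolding \<Phi>_def by blast
          then show ?thesis by blast
        next
          case False
          then have "\<Phi> i (\<lambda>_. 0) (\<lambda>_. 0)" unfolding \<Phi>_def by blast
          then show ?thesis by blast
        qed
      qed
      then have "\<exists>\<eta>f. \<forall>i. \<exists>\<mu>. \<Phi> i (\<eta>f i) \<mu>" by (rule choice)
      then obtain \<eta>f where "\<forall>i. \<exists>\<mu>. \<Phi> i (\<eta>f i) \<mu>" by blast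
      then have "\<exists>\<mu>f. \<forall>i. \<Phi> i (\<eta>f i) (\<mu>f i)" by (rule choice)
      then obtain \<mu>f where "\<forall>i. \<Phi> i (\<eta>f i) (\<mu>f i)" by blast
      then have f: "\<forall>i<r. (\<forall>j<s. 0 \<le> \<mu>f i j) \<and> (\<Sum>k<m. ys k \<bullet> \<eta>f i k) + (\<Sum>j<s. \<mu>f i j * v j) \<le> b i
          \<and> outer x (h i) = (\<Sum>k<m. outer (xs k) (\<eta>f i k)) + (\<Sum>j<s. \<mu>f i j *\<^sub>R transpose (V j))"
        unfolding \<Phi>_def by blast
      have "(x, \<mu>f, \<eta>f) \<in> Q" unfolding Q_def feasQ_def using f x1 by auto
      then show "x \<in> fst ` Q" by force
    qed
  qed
  have inf: "(INF x\<in>P. ereal (c \<bullet> x)) = (INF z\<in>Q. ereal (c \<bullet> fst z))"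
    unfolding PQ by (simp add: image_image)
  have argmin: "{x \<in> P. \<forall>x'\<in>P. c \<bullet> x \<le> c \<bullet> x'} = fst ` {z \<in> Q. \<forall>z'\<in>Q. c \<bullet> fst z \<le> c \<bullet> fst z'}"
  proof
    show "{x \<in> P. \<forall>x'\<in>P. c \<bullet> x \<le> c \<bullet> x'} \<subseteq> fst ` {z \<in> Q. \<forall>z'\<in>Q. c \<bullet> fst z \<le> c \<bullet> fst z'}"
    proof
      fix x assume x: "x \<in> {x \<in> P. \<forall>x'\<in>P. c \<bullet> x \<le> c \<bullet> x'}"
      then obtain z where z: "z \<in> Q" "x = fst z" unfolding PQ by blast
      have "\<forall>z'\<in>Q. c \<bullet> fst z \<le> c \<bullet> fst z'"
      proof
        fix z' assume "z' \<in> Q"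
        then have "fst z' \<in> P" unfolding PQ by blast
        then show "c \<bullet> fst z \<le> c \<bullet> fst z'" using x z by auto
      qed
      then show "x \<in> fst ` {z \<in> Q. \<forall>z'\<in>Q. c \<bullet> fst z \<le> c \<bullet> fst z'}" using z by blast
    qed
  next
    show "fst ` {z \<in> Q. \<forall>z'\<in>Q. c \<bullet> fst z \<le> c \<bullet> fst z'} \<subseteq> {x \<in> P. \<forall>x'\<in>P. c \<bullet> x \<le> c \<bullet> x'}"
      unfolding PQ by blast
  qed
  show ?thesis using PQ inf argmin by blast
qed

end
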